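(* Let $(\mathcal{M},\times,1)$ be a cartesian monoidal category with equivalences. Let $(X,\xi):(\Delta,+,0)\to(\mathcal{M},\times,1)$ be a colax monoidal functor and let $Y:(\Delta^+)^{\mathrm{op}}\to\mathcal{M}$ be the functor corresponding to $(X,\xi)$ under the isomorphism described in the context. The following are equivalent: (1) $(X,\xi)$ is a homotopy monoid, i.e. $\xi_0$ and every $\xi_{m,n}$ are equivalences; (2) for all $m,n\ge0$ the map $(Y(\alpha^1_{m,n}),Y(\alpha^2_{m,n})):Y[m+n]\to Y[m]\times Y[n]$ is an equivalence, and so is the unique map $Y[0]\to1$; (3) for every $n\ge0$ the map $(Y(\beta^n_0),\dots,Y(\beta^n_{n-1})):Y[n]\to Y[1]^n$ is an equivalence.
   Context: A monoidal category with equivalences is a monoidal category with a class of morphisms (equivalences) containing all isomorphisms, satisfying two-out-of-three for composition, and closed under $\otimes$; cartesian means the monoidal structure is given by chosen finite products $\times$ and terminal object $1$. $\Delta$: objects $n=\{0,\dots,n-1\}$ ($n\ge0$), order-preserving maps, monoidal under ordinal sum $+$ with unit $0$. $\Delta^+$: objects $[n]=\{0,\dots,n\}$ ($n\ge0$), order-preserving maps. A colax monoidal functor $(X,\xi)$ consists of a functor $X$ with natural (not necessarily invertible) maps $\xi_{m,n}:X(m+n)\to X(m)\times X(n)$ and $\xi_0:X(0)\to1$ satisfying coassociativity and counit axioms. There is an isomorphism of categories between colax monoidal functors $(\Delta,+,0)\to(\mathcal{M},\times,1)$ and functors $(\Delta^+)^{\mathrm{op}}\to\mathcal{M}$ under which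 $(X,\xi)$ corresponds to a $Y$ with $Y[n]=X(n)$ for all $n$, and with $Y(\alpha^1_{m,n})$ and $Y(\alpha^2_{m,n})$ equal to the first and second components of $\xi_{m,n}$. Here $\alpha^1_{m,n}:[m]\to[m+n]$, $\alpha^1_{m,n}(i)=i$, and $\alpha^2_{m,n}:[n]\to[m+n]$, $\alpha^2_{m,n}(i)=m+i$; for $0\le j<n$, $\beta^n_j:[1]\to[n]$ is $\beta^n_j(i)=i+j$. *)

theory Defs
  imports Main
begin

text \<open>Objects are the elements of type 'o, arrows the elements of type 'a.
  cmp C g f is the composite g o f (meaningful when dom g = cod f).\<close>

record ('o, 'a) cmc =
  c_dom  :: "'a \<Rightarrow> 'o"
  c_cod  :: "'a \<Rightarrow> 'o"
  c_id   :: "'o \<Rightarrow> 'a"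
  c_cmp  :: "'a \<Rightarrow> 'a \<Rightarrow> 'a"
  c_prod :: "'o \<Rightarrow> 'o \<Rightarrow> 'o"
  c_pr1  :: "'o \<Rightarrow> 'o \<Rightarrow> 'a"
  c_pr2  :: "'o \<Rightarrow> 'o \<Rightarrow> 'a"
  c_pair :: "'a \<Rightarrow> 'a \<Rightarrow> 'a"
  c_one  :: "'o"
  c_bang :: "'o \<Rightarrow> 'a"
  c_eqv  :: "'a set"

definition is_category :: "('o, 'a, 'z) cmc_scheme \<Rightarrow> bool" where
  "is_category C \<longleftrightarrow>
     (\<forall>A. c_dom C (c_id C A) = A \<and> c_cod C (c_id C A) = A) \<and>
     (\<forall>f g. c_dom C g = c_cod C f \<longrightarrow>
        c_dom C (c_cmp C g f) = c_dom C f \<and> c_cod C (c_cmp C g f) = c_cod C g) \<and>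
     (\<forall>f. c_cmp C f (c_id C (c_dom C f)) = f \<and> c_cmp C (c_id C (c_cod C f)) f = f) \<and>
     (\<forall>f g h. c_dom C g = c_cod C f \<and> c_dom C h = c_cod C g \<longrightarrow>
        c_cmp C h (c_cmp C g f) = c_cmp C (c_cmp C h g) f)"

definition is_cartesian :: "('o, 'a, 'z) cmc_scheme \<Rightarrow> bool" where
  "is_cartesian C \<longleftrightarrow> is_category C \<and>
     (\<forall>A B. c_dom C (c_pr1 C A B) = c_prod C A B \<and> c_cod C (c_pr1 C A B) = A \<and>
            c_dom C (c_pr2 C A B) = c_prod C A B \<and> c_cod C (c_pr2 C A B) = B) \<and>
     (\<forall>f g. c_dom C f = c_dom C g \<longrightarrow>
        c_dom C (c_pair C f g) = c_dom C f \<and>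
        c_cod C (c_pair C f g) = c_prod C (c_cod C f) (c_cod C g) \<and>
        c_cmp C (c_pr1 C (c_cod C f) (c_cod C g)) (c_pair C f g) = f \<and>
        c_cmp C (c_pr2 C (c_cod C f) (c_cod C g)) (c_pair C f g) = g) \<and>
     (\<forall>h A B. c_cod C h = c_prod C A B \<longrightarrow>
        c_pair C (c_cmp C (c_pr1 C A B) h) (c_cmp C (c_pr2 C A B) h) = h) \<and>
     (\<forall>A. c_dom C (c_bang C A) = A \<and> c_cod C (c_bang C A) = c_one C) \<and>
     (\<forall>f. c_cod C f = c_one C \<longrightarrow> f = c_bang C (c_dom C f))"

definition c_iso :: "('o, 'a, 'z) cmc_scheme \<Rightarrow> 'a \<Rightarrow> bool" where
  "c_iso C f \<longleftrightarrow> (\<exists>g. c_dom C g = c_cod C f \<and> c_cod C g = c_dom C f \<and>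
      c_cmp C g f = c_id C (c_dom C f) \<and> c_cmp C f g = c_id C (c_cod C f))"

definition c_tensor :: "('o, 'a, 'z) cmc_scheme \<Rightarrow> 'a \<Rightarrow> 'a \<Rightarrow> 'a" where
  "c_tensor C f g = c_pair C (c_cmp C f (c_pr1 C (c_dom C f) (c_dom C g)))
                             (c_cmp C g (c_pr2 C (c_dom C f) (c_dom C g)))"

definition c_assoc :: "('o, 'a, 'z) cmc_scheme \<Rightarrow> 'o \<Rightarrow> 'o \<Rightarrow> 'o \<Rightarrow> 'a" where
  "c_assoc C A B D =
     c_pair C (c_pair C (c_pr1 C A (c_prod C B D))
                        (c_cmp C (c_pr1 C B D) (c_pr2 C A (c_prod C B D))))
              (c_cmp C (c_pr2 C B D) (c_pr2 C A (c_prod C B D)))"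

definition cartesian_with_equivalences :: "('o, 'a, 'z) cmc_scheme \<Rightarrow> bool" where
  "cartesian_with_equivalences C \<longleftrightarrow> is_cartesian C \<and>
     (\<forall>f. c_iso C f \<longrightarrow> f \<in> c_eqv C) \<and>
     (\<forall>f g. c_dom C g = c_cod C f \<longrightarrow>
        (f \<in> c_eqv C \<and> g \<in> c_eqv C \<longrightarrow> c_cmp C g f \<in> c_eqv C) \<and>
        (f \<in> c_eqv C \<and> c_cmp C g f \<in> c_eqv C \<longrightarrow> g \<in> c_eqv C) \<and>
        (g \<in> c_eqv C \<and> c_cmp C g f \<in> c_eqv C \<longrightarrow> f \<in> c_eqv C)) \<and>
     (\<forall>f g. f \<in> c_eqv C \<and> g \<in> c_eqv C \<longrightarrow> c_tensor C f g \<in> c_eqv C)"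

text \<open>Morphisms of \<Delta>: order-preserving maps n = {0..<n} \<rightarrow> m = {0..<m},
  represented by functions nat \<Rightarrow> nat (only values on {0..<n} matter).\<close>
definition delta_map :: "nat \<Rightarrow> nat \<Rightarrow> (nat \<Rightarrow> nat) \<Rightarrow> bool" where
  "delta_map m n f \<longleftrightarrow> (\<forall>i<m. f i < n) \<and> (\<forall>i j. i \<le> j \<and> j < m \<longrightarrow> f i \<le> f j)"

text \<open>Morphisms of \<Delta>^+: order-preserving maps [m] = {0..m} \<rightarrow> [n] = {0..n}.\<close>
definition deltap_map :: "nat \<Rightarrow> nat \<Rightarrow> (nat \<Rightarrow> nat) \<Rightarrow> bool" where
  "deltap_map m n f \<longleftrightarrow> (\<forall>i\<le>m. f i \<le> n) \<and> (\<forall>i j. i \<le> j \<and> j \<le> m \<longrightarrow> f i \<le> f j)"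

text \<open>A functor \<Delta> \<rightarrow> M: Xa m n f is the image of f : m \<rightarrow> n.\<close>
definition delta_functor :: "('o, 'a, 'z) cmc_scheme \<Rightarrow> (nat \<Rightarrow> 'o) \<Rightarrow>
    (nat \<Rightarrow> nat \<Rightarrow> (nat \<Rightarrow> nat) \<Rightarrow> 'a) \<Rightarrow> bool" where
  "delta_functor C Xo Xa \<longleftrightarrow>
     (\<forall>m n f. delta_map m n f \<longrightarrow> c_dom C (Xa m n f) = Xo m \<and> c_cod C (Xa m n f) = Xo n) \<and>
     (\<forall>m n f g. delta_map m n f \<and> (\<forall>i<m. f i = g i) \<longrightarrow> Xa m n f = Xa m n g) \<and>
     (\<forall>n. Xa n n id = c_id C (Xo n)) \<and>
     (\<forall>l m n f g. delta_map l m f \<and> delta_map m n g \<longrightarrow>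
        Xa l n (g \<circ> f) = c_cmp C (Xa m n g) (Xa l m f))"

text \<open>A functor (\<Delta>^+)^op \<rightarrow> M: Ya m n f is the image of f : [m] \<rightarrow> [n],
  an arrow Yo n \<rightarrow> Yo m.\<close>
definition deltap_op_functor :: "('o, 'a, 'z) cmc_scheme \<Rightarrow> (nat \<Rightarrow> 'o) \<Rightarrow>
    (nat \<Rightarrow> nat \<Rightarrow> (nat \<Rightarrow> nat) \<Rightarrow> 'a) \<Rightarrow> bool" where
  "deltap_op_functor C Yo Ya \<longleftrightarrow>
     (\<forall>m n f. deltap_map m n f \<longrightarrow> c_dom C (Ya m n f) = Yo n \<and> c_cod C (Ya m n f) = Yo m) \<and>
     (\<forall>m n f g. deltap_map m n f \<and> (\<forall>i\<le>m. f i = g i) \<longrightarrow> Ya m n f = Ya m n g) \<and>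
     (\<forall>n. Ya n n id = c_id C (Yo n)) \<and>
     (\<forall>l m n f g. deltap_map l m f \<and> deltap_map m n g \<longrightarrow>
        Ya l n (g \<circ> f) = c_cmp C (Ya l m f) (Ya m n g))"

definition osum :: "nat \<Rightarrow> nat \<Rightarrow> (nat \<Rightarrow> nat) \<Rightarrow> (nat \<Rightarrow> nat) \<Rightarrow> nat \<Rightarrow> nat" where
  "osum m m' f g = (\<lambda>i. if i < m then f i else m' + g (i - m))"

definition colax_monoidal :: "('o, 'a, 'z) cmc_scheme \<Rightarrow> (nat \<Rightarrow> 'o) \<Rightarrow>
    (nat \<Rightarrow> nat \<Rightarrow> (nat \<Rightarrow> nat) \<Rightarrow> 'a) \<Rightarrow> (nat \<Rightarrow> nat \<Rightarrow> 'a) \<Rightarrow> 'a \<Rightarrow> bool" where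
  "colax_monoidal C Xo Xa xi xi0 \<longleftrightarrow> delta_functor C Xo Xa \<and>
     (\<forall>m n. c_dom C (xi m n) = Xo (m + n) \<and> c_cod C (xi m n) = c_prod C (Xo m) (Xo n)) \<and>
     c_dom C xi0 = Xo 0 \<and> c_cod C xi0 = c_one C \<and>
     (\<forall>m n m' n' f g. delta_map m m' f \<and> delta_map n n' g \<longrightarrow>
        c_cmp C (c_tensor C (Xa m m' f) (Xa n n' g)) (xi m n) =
        c_cmp C (xi m' n') (Xa (m + n) (m' + n') (osum m m' f g))) \<and>
     (\<forall>l m n. c_cmp C (c_tensor C (xi l m) (c_id C (Xo n))) (xi (l + m) n) =
        c_cmp C (c_assoc C (Xo l) (Xo m) (Xo n))
           (c_cmp C (c_tensor C (c_id C (Xo l)) (xi m n)) (xi l (m + n)))) \<and>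
     (\<forall>n. c_cmp C (c_pr2 C (c_one C) (Xo n))
            (c_cmp C (c_tensor C xi0 (c_id C (Xo n))) (xi 0 n)) = c_id C (Xo n)) \<and>
     (\<forall>n. c_cmp C (c_pr1 C (Xo n) (c_one C))
            (c_cmp C (c_tensor C (c_id C (Xo n)) xi0) (xi n 0)) = c_id C (Xo n))"

definition alpha1 :: "nat \<Rightarrow> nat \<Rightarrow> nat \<Rightarrow> nat" where "alpha1 m n = (\<lambda>i. i)"
definition alpha2 :: "nat \<Rightarrow> nat \<Rightarrow> nat \<Rightarrow> nat" where "alpha2 m n = (\<lambda>i. m + i)"
definition beta :: "nat \<Rightarrow> nat \<Rightarrow> nat \<Rightarrow> nat" where "beta n j = (\<lambda>i. i + j)"

definition corresponds :: "('o, 'a, 'z) cmc_scheme \<Rightarrow> (nat \<Rightarrow> 'o) \<Rightarrow> (nat \<Rightarrow> nat \<Rightarrow> 'a) \<Rightarrow>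
    (nat \<Rightarrow> 'o) \<Rightarrow> (nat \<Rightarrow> nat \<Rightarrow> (nat \<Rightarrow> nat) \<Rightarrow> 'a) \<Rightarrow> bool" where
  "corresponds C Xo xi Yo Ya \<longleftrightarrow>
     (\<forall>n. Yo n = Xo n) \<and>
     (\<forall>m n. Ya m (m + n) (alpha1 m n) = c_cmp C (c_pr1 C (Xo m) (Xo n)) (xi m n) \<and>
            Ya n (m + n) (alpha2 m n) = c_cmp C (c_pr2 C (Xo m) (Xo n)) (xi m n))"

fun c_pow :: "('o, 'a, 'z) cmc_scheme \<Rightarrow> 'o \<Rightarrow> nat \<Rightarrow> 'o" where
  "c_pow C A 0 = c_one C"
| "c_pow C A (Suc 0) = A"
| "c_pow C A (Suc (Suc n)) = c_prod C A (c_pow C A (Suc n))"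

fun c_tuple :: "('o, 'a, 'z) cmc_scheme \<Rightarrow> 'o \<Rightarrow> (nat \<Rightarrow> 'a) \<Rightarrow> nat \<Rightarrow> 'a" where
  "c_tuple C B fs 0 = c_bang C B"
| "c_tuple C B fs (Suc 0) = fs 0"
| "c_tuple C B fs (Suc (Suc n)) = c_pair C (fs 0) (c_tuple C B (\<lambda>i. fs (Suc i)) (Suc n))"

end

theory Submission
  imports Defs
begin

locale cart =
  fixes C :: "('o, 'a, 'z) cmc_scheme"
  assumes cart: "is_cartesian C"
begin

lemma cat: "is_category C" using cart unfolding is_cartesian_def by simp

lemma id_dom[simp]: "c_dom C (c_id C A) = A" and id_cod[simp]: "c_cod C (c_id C A) = A"
  using cat unfolding is_category_def by auto

lemma cmp_dom[simp]: "c_dom C g = c_cod C f \<Longrightarrow> c_dom C (c_cmp C g f) = c_dom C f"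
  and cmp_cod[simp]: "c_dom C g = c_cod C f \<Longrightarrow> c_cod C (c_cmp C g f) = c_cod C g"
  using cat unfolding is_category_def by auto

lemma id_r[simp]: "c_dom C f = A \<Longrightarrow> c_cmp C f (c_id C A) = f"
  and id_l[simp]: "c_cod C f = A \<Longrightarrow> c_cmp C (c_id C A) f = f"
  using cat unfolding is_category_def by auto

lemma cmp_assoc: "c_dom C g = c_cod C f \<Longrightarrow> c_dom C h = c_cod C g \<Longrightarrow>
   c_cmp C h (c_cmp C g f) = c_cmp C (c_cmp C h g) f"
  using cat unfolding is_category_def by auto

lemma pr_dc[simp]: "c_dom C (c_pr1 C A B) = c_prod C A B" "c_cod C (c_pr1 C A B) = A"
   "c_dom C (c_pr2 C A B) = c_prod C A B" "c_cod C (c_pr2 C A B) = B"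
  using cart unfolding is_cartesian_def by auto

lemma pair_dom[simp]: "c_dom C f = c_dom C g \<Longrightarrow> c_dom C (c_pair C f g) = c_dom C f"
  and pair_cod[simp]: "c_dom C f = c_dom C g \<Longrightarrow> c_cod C (c_pair C f g) = c_prod C (c_cod C f) (c_cod C g)"
  using cart unfolding is_cartesian_def by auto

lemma pr1_pair[simp]: "c_dom C f = c_dom C g \<Longrightarrow> c_cod C f = A \<Longrightarrow> c_cod C g = B \<Longrightarrow>
   c_cmp C (c_pr1 C A B) (c_pair C f g) = f"
  and pr2_pair[simp]: "c_dom C f = c_dom C g \<Longrightarrow> c_cod C f = A \<Longrightarrow> c_cod C g = B \<Longrightarrow>
   c_cmp C (c_pr2 C A B) (c_pair C f g) = g"
  using cart unfolding is_cartesian_def by auto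

lemma pair_eta: "c_cod C h = c_prod C A B \<Longrightarrow>
   c_pair C (c_cmp C (c_pr1 C A B) h) (c_cmp C (c_pr2 C A B) h) = h"
  using cart unfolding is_cartesian_def by auto

lemma prod_ext: "c_cod C h = c_prod C A B \<Longrightarrow> c_cod C k = c_prod C A B \<Longrightarrow>
   c_cmp C (c_pr1 C A B) h = c_cmp C (c_pr1 C A B) k \<Longrightarrow>
   c_cmp C (c_pr2 C A B) h = c_cmp C (c_pr2 C A B) k \<Longrightarrow> h = k"
  by (metis pair_eta)

lemma bang_dc[simp]: "c_dom C (c_bang C A) = A" "c_cod C (c_bang C A) = c_one C"
  using cart unfolding is_cartesian_def by auto

lemma bang_uniq: "c_cod C f = c_one C \<Longrightarrow> f = c_bang C (c_dom C f)"
  using cart unfolding is_cartesian_def by auto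

lemma pair_cmp: "c_dom C f = c_dom C g \<Longrightarrow> c_dom C f = c_cod C h \<Longrightarrow>
   c_cmp C (c_pair C f g) h = c_pair C (c_cmp C f h) (c_cmp C g h)"
proof -
  assume a: "c_dom C f = c_dom C g" "c_dom C f = c_cod C h"
  let ?p = "c_pair C f g"
  have "c_cod C (c_cmp C ?p h) = c_prod C (c_cod C f) (c_cod C g)" using a by simp
  then have "c_cmp C ?p h = c_pair C (c_cmp C (c_pr1 C (c_cod C f) (c_cod C g)) (c_cmp C ?p h))
     (c_cmp C (c_pr2 C (c_cod C f) (c_cod C g)) (c_cmp C ?p h))" by (metis pair_eta)
  also have "\<dots> = c_pair C (c_cmp C f h) (c_cmp C g h)"
    using a by (simp add: cmp_assoc)
  finally show ?thesis .
qed

lemma tensor_dc[simp]: "c_dom C (c_tensor C f g) = c_prod C (c_dom C f) (c_dom C g)"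
  "c_cod C (c_tensor C f g) = c_prod C (c_cod C f) (c_cod C g)"
  unfolding c_tensor_def by simp_all

lemma tensor_pair: "c_dom C f = c_cod C h \<Longrightarrow> c_dom C g = c_cod C k \<Longrightarrow> c_dom C h = c_dom C k \<Longrightarrow>
  c_cmp C (c_tensor C f g) (c_pair C h k) = c_pair C (c_cmp C f h) (c_cmp C g k)"
  unfolding c_tensor_def by (simp add: pair_cmp flip: cmp_assoc)

lemma iso_pr1: "c_iso C (c_pr1 C A (c_one C))"
proof -
  let ?g = "c_pair C (c_id C A) (c_bang C A)"
  have "c_dom C ?g = c_cod C (c_pr1 C A (c_one C)) \<and> c_cod C ?g = c_dom C (c_pr1 C A (c_one C)) \<and>
      c_cmp C ?g (c_pr1 C A (c_one C)) = c_id C (c_dom C (c_pr1 C A (c_one C))) \<and>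
      c_cmp C (c_pr1 C A (c_one C)) ?g = c_id C (c_cod C (c_pr1 C A (c_one C)))"
  proof (intro conjI)
  show "c_dom C ?g = c_cod C (c_pr1 C A (c_one C))" by simp
  show "c_cod C ?g = c_dom C (c_pr1 C A (c_one C))" by simp
  show "c_cmp C (c_pr1 C A (c_one C)) ?g = c_id C (c_cod C (c_pr1 C A (c_one C)))" by simp
  show "c_cmp C ?g (c_pr1 C A (c_one C)) = c_id C (c_dom C (c_pr1 C A (c_one C)))"
  proof -
    let ?P = "c_prod C A (c_one C)"
    have e1: "c_cmp C ?g (c_pr1 C A (c_one C)) = c_pair C (c_pr1 C A (c_one C)) (c_cmp C (c_bang C A) (c_pr1 C A (c_one C)))"
      by (simp add: pair_cmp)
    have e2: "c_cmp C (c_bang C A) (c_pr1 C A (c_one C)) = c_pr2 C A (c_one C)"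
      by (metis bang_uniq bang_dc pr_dc cmp_cod cmp_dom)
    have e3: "c_id C ?P = c_pair C (c_pr1 C A (c_one C)) (c_pr2 C A (c_one C))"
      using pair_eta[of "c_id C ?P" A "c_one C"] by simp
    show ?thesis using e1 e2 e3 by simp
  qed
  qed
  then show ?thesis unfolding c_iso_def by blast
qed

lemma iso_pr2: "c_iso C (c_pr2 C (c_one C) A)"
proof -
  let ?g = "c_pair C (c_bang C A) (c_id C A)"
  let ?p = "c_pr2 C (c_one C) A"
  have e2: "c_cmp C (c_bang C A) ?p = c_pr1 C (c_one C) A"
    by (metis bang_uniq bang_dc pr_dc cmp_cod cmp_dom)
  have e3: "c_id C (c_prod C (c_one C) A) = c_pair C (c_pr1 C (c_one C) A) ?p"
    using pair_eta[of "c_id C (c_prod C (c_one C) A)" "c_one C" A] by simp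
  have "c_cmp C ?g ?p = c_id C (c_dom C ?p)"
    using e2 e3 by (simp add: pair_cmp)
  moreover have "c_cmp C ?p ?g = c_id C (c_cod C ?p)" by simp
  ultimately show ?thesis unfolding c_iso_def
    by (intro exI[of _ ?g]) simp
qed

lemma iso_id: "c_iso C (c_id C A)"
  unfolding c_iso_def by (intro exI[of _ "c_id C A"]) simp

lemma iso_assoc: "c_iso C (c_assoc C A B D)"
proof -
  let ?a = "c_assoc C A B D"
  let ?g = "c_pair C (c_cmp C (c_pr1 C A B) (c_pr1 C (c_prod C A B) D))
     (c_pair C (c_cmp C (c_pr2 C A B) (c_pr1 C (c_prod C A B) D)) (c_pr2 C (c_prod C A B) D))"
  have d: "c_dom C ?a = c_prod C A (c_prod C B D)" "c_cod C ?a = c_prod C (c_prod C A B) D"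
    unfolding c_assoc_def by simp_all
  have dg: "c_dom C ?g = c_prod C (c_prod C A B) D" "c_cod C ?g = c_prod C A (c_prod C B D)"
    by simp_all
  have 1: "c_cmp C ?g ?a = c_id C (c_prod C A (c_prod C B D))"
    by (rule prod_ext[where A=A and B="c_prod C B D"])
      (simp_all add: c_assoc_def pair_cmp pair_eta flip: cmp_assoc)
  have 2: "c_cmp C ?a ?g = c_id C (c_prod C (c_prod C A B) D)"
    apply (rule prod_ext[where A="c_prod C A B" and B=D])
    apply (simp_all add: c_assoc_def pair_cmp pair_eta flip: cmp_assoc)
    done
  show ?thesis unfolding c_iso_def
    by (intro exI[of _ ?g]) (simp add: d dg 1 2)
qed

lemma nat2_induct[case_names 0 1 SS]:
  assumes "P 0" "P (Suc 0)" "\<And>n. P (Suc n) \<Longrightarrow> P (Suc (Suc n))" shows "P n"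
proof (induction n rule: less_induct)
  case (less n)
  show ?case
  proof (cases n)
    case 0 then show ?thesis using assms by simp
  next
    case (Suc k) then show ?thesis using less assms by (cases k) auto
  qed
qed

lemma tuple_cong: "(\<And>j. j < n \<Longrightarrow> fs j = gs j) \<Longrightarrow> c_tuple C B fs n = c_tuple C B gs n"
proof (induction n arbitrary: fs gs rule: nat2_induct)
  case (SS n)
  have "c_tuple C B (\<lambda>i. fs (Suc i)) (Suc n) = c_tuple C B (\<lambda>i. gs (Suc i)) (Suc n)"
    by (rule SS.IH) (simp add: SS.prems)
  moreover have "fs 0 = gs 0" by (rule SS.prems) simp
  ultimately show ?case by simp
qed (simp_all)

lemma tuple_dom: "(\<And>j. j < n \<Longrightarrow> c_dom C (fs j) = B) \<Longrightarrow> c_dom C (c_tuple C B fs n) = B"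
proof (induction n arbitrary: fs rule: nat2_induct)
  case (SS n)
  have "c_dom C (c_tuple C B (\<lambda>i. fs (Suc i)) (Suc n)) = B"
    by (rule SS.IH) (simp add: SS.prems)
  moreover have "c_dom C (fs 0) = B" by (rule SS.prems) simp
  ultimately show ?case by simp
qed (simp_all)

lemma tuple_cmp: "(\<And>j. j < n \<Longrightarrow> c_dom C (fs j) = B) \<Longrightarrow> c_cod C h = B \<Longrightarrow>
  c_tuple C (c_dom C h) (\<lambda>j. c_cmp C (fs j) h) n = c_cmp C (c_tuple C B fs n) h"
proof (induction n arbitrary: fs rule: nat2_induct)
  case 0
  then show ?case by simp (metis bang_uniq bang_dc cmp_cod cmp_dom)
next
  case 1
  then show ?case by simp
next
  case (SS n)
  have "c_dom C (c_tuple C B (\<lambda>i. fs (Suc i)) (Suc n)) = B"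
    by (rule tuple_dom) (use SS in auto)
  moreover have "c_tuple C (c_dom C h) (\<lambda>i. c_cmp C (fs (Suc i)) h) (Suc n) =
      c_cmp C (c_tuple C B (\<lambda>i. fs (Suc i)) (Suc n)) h"
    by (rule SS.IH) (simp_all add: SS.prems)
  moreover have "c_dom C (fs 0) = B" by (rule SS.prems) simp
  ultimately show ?case using SS.prems(2) by (simp add: pair_cmp)
qed

end

theorem proposition3p1p8:
  fixes C :: "('o, 'a, 'z) cmc_scheme"
    and Xo :: "nat \<Rightarrow> 'o" and Xa :: "nat \<Rightarrow> nat \<Rightarrow> (nat \<Rightarrow> nat) \<Rightarrow> 'a"
    and xi :: "nat \<Rightarrow> nat \<Rightarrow> 'a" and xi0 :: "'a"
    and Yo :: "nat \<Rightarrow> 'o" and Ya :: "nat \<Rightarrow> nat \<Rightarrow> (nat \<Rightarrow> nat) \<Rightarrow> 'a"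
  assumes "cartesian_with_equivalences C"
    and "colax_monoidal C Xo Xa xi xi0"
    and "deltap_op_functor C Yo Ya"
    and "corresponds C Xo xi Yo Ya"
  shows "((xi0 \<in> c_eqv C \<and> (\<forall>m n. xi m n \<in> c_eqv C))
           \<longleftrightarrow> ((\<forall>m n. c_pair C (Ya m (m + n) (alpha1 m n)) (Ya n (m + n) (alpha2 m n)) \<in> c_eqv C)
                \<and> c_bang C (Yo 0) \<in> c_eqv C))
       \<and> ((xi0 \<in> c_eqv C \<and> (\<forall>m n. xi m n \<in> c_eqv C))
           \<longleftrightarrow> (\<forall>n. c_tuple C (Yo n) (\<lambda>j. Ya 1 n (beta n j)) n \<in> c_eqv C))"
proof -
  note A = assms
  interpret cart C using A(1) unfolding cartesian_with_equivalences_def by (intro cart.intro) simp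
  have iso_eqv: "\<And>f. c_iso C f \<Longrightarrow> f \<in> c_eqv C"
    using A(1) unfolding cartesian_with_equivalences_def by blast
  have comp_eqv: "\<And>f g. c_dom C g = c_cod C f \<Longrightarrow> f \<in> c_eqv C \<Longrightarrow> g \<in> c_eqv C \<Longrightarrow> c_cmp C g f \<in> c_eqv C"
    using A(1) unfolding cartesian_with_equivalences_def by blast
  have canc_eqv: "\<And>f g. c_dom C g = c_cod C f \<Longrightarrow> g \<in> c_eqv C \<Longrightarrow> c_cmp C g f \<in> c_eqv C \<Longrightarrow> f \<in> c_eqv C"
    using A(1) unfolding cartesian_with_equivalences_def by blast
  have tens_eqv: "\<And>f g. f \<in> c_eqv C \<Longrightarrow> g \<in> c_eqv C \<Longrightarrow> c_tensor C f g \<in> c_eqv C"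
    using A(1) unfolding cartesian_with_equivalences_def by blast
  have id_eqv: "\<And>X. c_id C X \<in> c_eqv C" using iso_eqv iso_id by blast
  have YX: "Yo = Xo" using A(4) unfolding corresponds_def by auto
  have xi_dc: "\<And>m n. c_dom C (xi m n) = Xo (m + n)" "\<And>m n. c_cod C (xi m n) = c_prod C (Xo m) (Xo n)"
    using A(2) unfolding colax_monoidal_def by auto
  have xi0_dc: "c_dom C xi0 = Xo 0" "c_cod C xi0 = c_one C"
    using A(2) unfolding colax_monoidal_def by auto
  have c1: "\<And>m n. Ya m (m + n) (alpha1 m n) = c_cmp C (c_pr1 C (Xo m) (Xo n)) (xi m n)"
   and c2: "\<And>m n. Ya n (m + n) (alpha2 m n) = c_cmp C (c_pr2 C (Xo m) (Xo n)) (xi m n)"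
    using A(4) unfolding corresponds_def by auto
  have Ydom: "\<And>m n f. deltap_map m n f \<Longrightarrow> c_dom C (Ya m n f) = Xo n"
    using A(3) YX unfolding deltap_op_functor_def by auto
  have Ycong: "\<And>m n f g. deltap_map m n f \<Longrightarrow> (\<And>i. i \<le> m \<Longrightarrow> f i = g i) \<Longrightarrow> Ya m n f = Ya m n g"
    using A(3) unfolding deltap_op_functor_def by blast
  have Yid: "\<And>n. Ya n n id = c_id C (Xo n)"
    using A(3) YX unfolding deltap_op_functor_def by auto
  have Ycmp: "\<And>l m n f g. deltap_map l m f \<Longrightarrow> deltap_map m n g \<Longrightarrow>
        Ya l n (g \<circ> f) = c_cmp C (Ya l m f) (Ya m n g)"
    using A(3) unfolding deltap_op_functor_def by blast
  have bmap: "\<And>n j. j < n \<Longrightarrow> deltap_map 1 n (beta n j)"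
    unfolding deltap_map_def beta_def by auto
  have xi_pair: "\<And>m n. c_pair C (Ya m (m + n) (alpha1 m n)) (Ya n (m + n) (alpha2 m n)) = xi m n"
    unfolding c1 c2 by (rule pair_eta) (rule xi_dc(2))
  have xi0_bang: "xi0 = c_bang C (Xo 0)" using bang_uniq[OF xi0_dc(2)] xi0_dc(1) by simp
  have part1: "(\<forall>m n. c_pair C (Ya m (m + n) (alpha1 m n)) (Ya n (m + n) (alpha2 m n)) \<in> c_eqv C)
                \<and> c_bang C (Yo 0) \<in> c_eqv C \<longleftrightarrow> (xi0 \<in> c_eqv C \<and> (\<forall>m n. xi m n \<in> c_eqv C))"
    using xi_pair xi0_bang YX by auto
  define T where "T n = c_tuple C (Xo n) (\<lambda>j. Ya 1 n (beta n j)) n" for n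
  have T_eq: "c_tuple C (Yo n) (\<lambda>j. Ya 1 n (beta n j)) n = T n" for n
    unfolding T_def YX ..
  have K0: "T 0 = xi0" unfolding T_def using xi0_bang by simp
  have K1: "T 1 = c_id C (Xo 1)"
  proof -
    have "T 1 = Ya 1 1 (beta 1 0)" unfolding T_def by simp
    also have "\<dots> = Ya 1 1 id" by (rule Ycong) (auto simp: deltap_map_def beta_def)
    finally show ?thesis using Yid by simp
  qed
  have Kd: "c_dom C (T n) = Xo n" for n
    unfolding T_def by (rule tuple_dom, erule Ydom[OF bmap])
  have Ks: "T (Suc (Suc n)) = c_cmp C (c_tensor C (c_id C (Xo 1)) (T (Suc n))) (xi 1 (Suc n))" for n
  proof -
    let ?x = "xi 1 (Suc n)"
    let ?p1 = "c_cmp C (c_pr1 C (Xo 1) (Xo (Suc n))) ?x"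
    let ?p2 = "c_cmp C (c_pr2 C (Xo 1) (Xo (Suc n))) ?x"
    have a1: "Ya 1 (Suc (Suc n)) (beta (Suc (Suc n)) 0) = ?p1"
      using c1[where m=1 and n="Suc n"] by (simp add: alpha1_def beta_def)
    have a2: "Ya (Suc n) (Suc (Suc n)) (alpha2 1 (Suc n)) = ?p2"
      using c2[where m=1 and n="Suc n"] by simp
    have a3: "Ya 1 (Suc (Suc n)) (beta (Suc (Suc n)) (Suc j)) = c_cmp C (Ya 1 (Suc n) (beta (Suc n) j)) ?p2"
      if "j < Suc n" for j
    proof -
      have "beta (Suc (Suc n)) (Suc j) = alpha2 1 (Suc n) \<circ> beta (Suc n) j"
        by (auto simp: alpha2_def beta_def)
      moreover have "deltap_map (Suc n) (Suc (Suc n)) (alpha2 1 (Suc n))"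
        by (auto simp: alpha2_def deltap_map_def)
      ultimately show ?thesis using Ycmp[OF bmap[OF that]] a2 by simp
    qed
    have dp2: "c_dom C ?p2 = Xo (Suc (Suc n))" "c_cod C ?p2 = Xo (Suc n)"
      using xi_dc by simp_all
    have "T (Suc (Suc n)) = c_pair C ?p1 (c_tuple C (Xo (Suc (Suc n)))
        (\<lambda>j. Ya 1 (Suc (Suc n)) (beta (Suc (Suc n)) (Suc j))) (Suc n))"
      unfolding T_def using a1 by simp
    also have "c_tuple C (Xo (Suc (Suc n))) (\<lambda>j. Ya 1 (Suc (Suc n)) (beta (Suc (Suc n)) (Suc j))) (Suc n)
       = c_tuple C (c_dom C ?p2) (\<lambda>j. c_cmp C (Ya 1 (Suc n) (beta (Suc n) j)) ?p2) (Suc n)"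
      unfolding dp2 by (rule tuple_cong) (use a3 in simp)
    also have "\<dots> = c_cmp C (T (Suc n)) ?p2"
      unfolding T_def by (rule tuple_cmp, erule Ydom[OF bmap]) (use dp2 in \<open>simp add: One_nat_def\<close>)
    finally have L: "T (Suc (Suc n)) = c_pair C ?p1 (c_cmp C (T (Suc n)) ?p2)" .
    have "?x = c_pair C ?p1 ?p2" by (rule pair_eta[symmetric]) (rule xi_dc(2))
    then have "c_cmp C (c_tensor C (c_id C (Xo 1)) (T (Suc n))) ?x
       = c_cmp C (c_tensor C (c_id C (Xo 1)) (T (Suc n))) (c_pair C ?p1 ?p2)" by simp
    also have "\<dots> = c_pair C (c_cmp C (c_id C (Xo 1)) ?p1) (c_cmp C (T (Suc n)) ?p2)"
      apply (rule tensor_pair)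
      using dp2 Kd[of "Suc n"] xi_dc(2)[of 1 "Suc n"] by simp_all
    finally show ?thesis using L xi_dc by simp
  qed
  have part2: "(xi0 \<in> c_eqv C \<and> (\<forall>m n. xi m n \<in> c_eqv C)) \<longleftrightarrow> (\<forall>n. T n \<in> c_eqv C)"
  proof
    assume H: "xi0 \<in> c_eqv C \<and> (\<forall>m n. xi m n \<in> c_eqv C)"
    show "\<forall>n. T n \<in> c_eqv C"
    proof
      fix n show "T n \<in> c_eqv C"
      proof (induction n rule: nat2_induct)
        case 0 then show ?case using K0 H by simp
      next
        case 1 then show ?case using K1 id_eqv by simp
      next
        case (SS n)
        then show ?case unfolding Ks
          by (intro comp_eqv tens_eqv id_eqv) (simp_all add: H Kd xi_dc)
      qed
    qed
  next
    assume H: "\<forall>n. T n \<in> c_eqv C"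
    have e0: "xi0 \<in> c_eqv C" using H[rule_format, of 0] K0 by simp
    have e1S: "xi 1 (Suc k) \<in> c_eqv C" for k
    proof -
      have "c_cmp C (c_tensor C (c_id C (Xo 1)) (T (Suc k))) (xi 1 (Suc k)) \<in> c_eqv C"
        using H unfolding Ks[symmetric] by blast
      then show ?thesis
        by (rule canc_eqv[rotated 2]) (simp_all add: Kd xi_dc tens_eqv id_eqv H)
    qed
    have eR: "xi n 0 \<in> c_eqv C" for n
    proof (rule canc_eqv[where g="c_cmp C (c_pr1 C (Xo n) (c_one C)) (c_tensor C (c_id C (Xo n)) xi0)"])
      show "c_dom C (c_cmp C (c_pr1 C (Xo n) (c_one C)) (c_tensor C (c_id C (Xo n)) xi0)) = c_cod C (xi n 0)"
        by (simp add: xi0_dc xi_dc)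
      show "c_cmp C (c_pr1 C (Xo n) (c_one C)) (c_tensor C (c_id C (Xo n)) xi0) \<in> c_eqv C"
        by (intro comp_eqv tens_eqv id_eqv e0 iso_eqv iso_pr1) (simp add: xi0_dc)
      have "c_cmp C (c_cmp C (c_pr1 C (Xo n) (c_one C)) (c_tensor C (c_id C (Xo n)) xi0)) (xi n 0)
         = c_cmp C (c_pr1 C (Xo n) (c_one C)) (c_cmp C (c_tensor C (c_id C (Xo n)) xi0) (xi n 0))"
        by (rule cmp_assoc[symmetric]) (simp_all add: xi0_dc xi_dc)
      also have "\<dots> = c_id C (Xo n)" using A(2) unfolding colax_monoidal_def by auto
      finally show "c_cmp C (c_cmp C (c_pr1 C (Xo n) (c_one C)) (c_tensor C (c_id C (Xo n)) xi0)) (xi n 0) \<in> c_eqv C"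
        using id_eqv by simp
    qed
    have eL: "xi 0 n \<in> c_eqv C" for n
    proof (rule canc_eqv[where g="c_cmp C (c_pr2 C (c_one C) (Xo n)) (c_tensor C xi0 (c_id C (Xo n)))"])
      show "c_dom C (c_cmp C (c_pr2 C (c_one C) (Xo n)) (c_tensor C xi0 (c_id C (Xo n)))) = c_cod C (xi 0 n)"
        by (simp add: xi0_dc xi_dc)
      show "c_cmp C (c_pr2 C (c_one C) (Xo n)) (c_tensor C xi0 (c_id C (Xo n))) \<in> c_eqv C"
        by (intro comp_eqv tens_eqv id_eqv e0 iso_eqv iso_pr2) (simp add: xi0_dc)
      have "c_cmp C (c_cmp C (c_pr2 C (c_one C) (Xo n)) (c_tensor C xi0 (c_id C (Xo n)))) (xi 0 n)
         = c_cmp C (c_pr2 C (c_one C) (Xo n)) (c_cmp C (c_tensor C xi0 (c_id C (Xo n))) (xi 0 n))"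
        by (rule cmp_assoc[symmetric]) (simp_all add: xi0_dc xi_dc)
      also have "\<dots> = c_id C (Xo n)" using A(2) unfolding colax_monoidal_def by auto
      finally show "c_cmp C (c_cmp C (c_pr2 C (c_one C) (Xo n)) (c_tensor C xi0 (c_id C (Xo n)))) (xi 0 n) \<in> c_eqv C"
        using id_eqv by simp
    qed
    have e1: "xi 1 k \<in> c_eqv C" for k
      using e1S eR by (cases k) auto
    have coas: "c_cmp C (c_tensor C (xi l m) (c_id C (Xo n))) (xi (l + m) n) =
        c_cmp C (c_assoc C (Xo l) (Xo m) (Xo n))
           (c_cmp C (c_tensor C (c_id C (Xo l)) (xi m n)) (xi l (m + n)))" for l m n
      using A(2) unfolding colax_monoidal_def by blast
    have assoc_dom: "c_dom C (c_assoc C X Y Z) = c_prod C X (c_prod C Y Z)" for X Y Z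
      unfolding c_assoc_def by simp
    have eall: "xi m n \<in> c_eqv C" for m n
    proof (induction m)
      case 0 then show ?case using eL by simp
    next
      case (Suc m)
      have r: "c_cmp C (c_tensor C (xi 1 m) (c_id C (Xo n))) (xi (1 + m) n) \<in> c_eqv C"
        unfolding coas
        by (intro comp_eqv tens_eqv id_eqv e1 Suc iso_eqv iso_assoc) (simp_all add: xi_dc assoc_dom)
      have "xi (1 + m) n \<in> c_eqv C"
        by (rule canc_eqv[OF _ _ r]) (simp_all add: xi_dc tens_eqv e1 e1[unfolded One_nat_def] id_eqv)
      then show ?case by simp
    qed
    show "xi0 \<in> c_eqv C \<and> (\<forall>m n. xi m n \<in> c_eqv C)" using e0 eall by blast
  qed
  show ?thesis using part1 part2 T_eq by auto
qed


end
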